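(* Every signified graph $(G,\Sigma)$ whose underlying graph $G$ is outerplanar with girth at least $4$ admits a signified homomorphism to $AT(K_4^* )$, where $K_4^*$ is the complete graph on $4$ vertices with exactly one negative edge.
   Context: A signified graph $(G,\Sigma)$ is a simple graph $G$ with a set $\Sigma\subseteq E(G)$ of negative edges, other edges positive. A signified homomorphism of $(G,\Sigma)$ to $(H,\Lambda)$ is a map $V(G)\to V(H)$ sending every edge to an edge of the same sign. For a signified graph $(H,\Lambda)$, $AT(H,\Lambda)$ has vertex set $\{u_0,u_1:u\in V(H)\}$; for every edge $uv$ of $H$ it has edges $u_0v_0,u_1v_1$ with the sign of $uv$ and $u_0v_1,u_1v_0$ with the opposite sign; no other edges. The girth is the length of a shortest cycle (infinite for forests). *)

theory Defs
  imports Main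
begin

text \<open>A finite simple graph: vertex set V, edge set E of 2-element subsets of V.
  A signified graph additionally has a set Sig of negative edges, Sig a subset of E.\<close>

definition simple_graph :: "'a set \<Rightarrow> 'a set set \<Rightarrow> bool" where
  "simple_graph V E \<longleftrightarrow> finite V \<and> (\<forall>e\<in>E. e \<subseteq> V \<and> card e = 2)"

definition signified_graph :: "'a set \<Rightarrow> 'a set set \<Rightarrow> 'a set set \<Rightarrow> bool" where
  "signified_graph V E Sig \<longleftrightarrow> simple_graph V E \<and> Sig \<subseteq> E"

definition signified_hom ::
  "'a set \<Rightarrow> 'a set set \<Rightarrow> 'a set set \<Rightarrow> 'b set \<Rightarrow> 'b set set \<Rightarrow> 'b set set \<Rightarrow> ('a \<Rightarrow> 'b) \<Rightarrow> bool" where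
  "signified_hom V E Sig W F Lam f \<longleftrightarrow>
     (\<forall>v\<in>V. f v \<in> W) \<and>
     (\<forall>e\<in>E. f ` e \<in> F \<and> (e \<in> Sig \<longleftrightarrow> f ` e \<in> Lam))"

definition is_cycle :: "'a set \<Rightarrow> 'a set set \<Rightarrow> 'a list \<Rightarrow> bool" where
  "is_cycle V E cs \<longleftrightarrow> length cs \<ge> 3 \<and> distinct cs \<and> set cs \<subseteq> V \<and>
     (\<forall>i < length cs. {cs ! i, cs ! ((i + 1) mod length cs)} \<in> E)"

definition girth_at_least :: "'a set \<Rightarrow> 'a set set \<Rightarrow> nat \<Rightarrow> bool" where
  "girth_at_least V E k \<longleftrightarrow> (\<forall>cs. is_cycle V E cs \<longrightarrow> length cs \<ge> k)"

text \<open>Outerplanar: the vertices can be placed in convex position (on a circle, here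
  cut open into a linear order via an injective position map) so that no two edges cross.\<close>
definition outerplanar :: "'a set \<Rightarrow> 'a set set \<Rightarrow> bool" where
  "outerplanar V E \<longleftrightarrow> (\<exists>pos :: 'a \<Rightarrow> nat. inj_on pos V \<and>
     (\<forall>a b c d. {a, b} \<in> E \<longrightarrow> {c, d} \<in> E \<longrightarrow>
        \<not> (pos a < pos c \<and> pos c < pos b \<and> pos b < pos d)))"

text \<open>The construction AT(H, Lam): vertices (u,i) with i a bit; for each edge uv of H,
  edges (u,i)(v,j); sign of uv if i = j, the opposite sign if i differs from j.\<close>
definition AT_vertices :: "'b set \<Rightarrow> ('b \<times> bool) set" where
  "AT_vertices W = W \<times> UNIV"

definition AT_edges :: "'b set set \<Rightarrow> ('b \<times> bool) set set" where
  "AT_edges F = {{(u, i), (v, j)} | u v i j. {u, v} \<in> F}"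

definition AT_neg :: "'b set set \<Rightarrow> 'b set set \<Rightarrow> ('b \<times> bool) set set" where
  "AT_neg F Lam = {{(u, i), (v, j)} | u v i j. {u, v} \<in> F \<and> (({u, v} \<in> Lam) \<noteq> (i \<noteq> j))}"

definition K4_vertices :: "nat set" where "K4_vertices = {0, 1, 2, 3}"
definition K4_edges :: "nat set set" where
  "K4_edges = {{u, v} | u v. u \<in> K4_vertices \<and> v \<in> K4_vertices \<and> u \<noteq> v}"
definition K4_neg :: "nat set set" where "K4_neg = {{0, 1}}"

end

theory Submission
  imports Defs
begin

definition tneg :: "nat \<times> bool \<Rightarrow> nat \<times> bool \<Rightarrow> bool" where
  "tneg p q = (({fst p, fst q} = {0::nat,1}) \<noteq> (snd p \<noteq> snd q))"

lemma ex4: "(\<exists>x::nat\<times>bool. fst x < 4 \<and> P x) \<longleftrightarrow> (\<exists>c\<in>{0,1,2,3}. \<exists>b\<in>{True,False}. P (c,b))"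
proof
  assume "\<exists>x::nat\<times>bool. fst x < 4 \<and> P x"
  then obtain c b where "c < 4" "P (c,b)" by auto
  then show "\<exists>c\<in>{0,1,2,3}. \<exists>b\<in>{True,False}. P (c,b)"
    by (cases b) (auto simp: less_Suc_eq numeral_eq_Suc)
next
  assume "\<exists>c\<in>{0,1,2,3}. \<exists>b\<in>{True,False}. P (c,b)"
  then obtain c b where "c \<in> {0,1,2,3}" "P (c,b)" by auto
  then show "\<exists>x::nat\<times>bool. fst x < 4 \<and> P x" by (intro exI[of _ "(c,b)"]) auto
qed

lemma all4: "(\<forall>x::nat\<times>bool. fst x < 4 \<longrightarrow> P x) \<longleftrightarrow> (\<forall>c\<in>{0,1,2,3}. \<forall>b\<in>{True,False}. P (c,b))"
  using ex4[of "\<lambda>x. \<not> P x"] by blast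

lemma P1: "\<forall>p. fst p < 4 \<longrightarrow> (\<forall>s. \<exists>q. fst q < 4 \<and> fst q \<noteq> fst p \<and> tneg p q = s)"
  unfolding all4 ex4 tneg_def by (simp add: doubleton_eq_iff all_bool_eq ex_bool_eq)

lemma P3: "\<forall>p. fst p < 4 \<longrightarrow> (\<forall>q. fst q < 4 \<longrightarrow> (\<forall>s1 s2 s3. \<exists>x. fst x < 4 \<and> (\<exists>y. fst y < 4 \<and>
   fst x \<noteq> fst p \<and> fst y \<noteq> fst x \<and> fst q \<noteq> fst y \<and> tneg p x = s1 \<and> tneg x y = s2 \<and> tneg y q = s3)))"
  unfolding all4 ex4 tneg_def by (simp add: doubleton_eq_iff all_bool_eq ex_bool_eq)



lemma tneg_sym: "tneg p q = tneg q p"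
proof -
  have 1: "{fst p, fst q} = {fst q, fst p}" by (rule insert_commute)
  have 2: "(snd p \<noteq> snd q) = (snd q \<noteq> snd p)" by (rule eq_commute[THEN arg_cong[where f=Not]])
  show ?thesis by (simp only: tneg_def 1 2)
qed

definition goodf :: "'a set \<Rightarrow> 'a set set \<Rightarrow> 'a set set \<Rightarrow> ('a \<Rightarrow> nat \<times> bool) \<Rightarrow> bool" where
  "goodf V E Sig f \<longleftrightarrow> (\<forall>v\<in>V. fst (f v) < 4) \<and>
     (\<forall>a b. {a,b} \<in> E \<longrightarrow> fst (f a) \<noteq> fst (f b) \<and> ({a,b} \<in> Sig \<longleftrightarrow> tneg (f a) (f b)))"

lemma goodfI:
  assumes "\<And>v. v \<in> V \<Longrightarrow> fst (f v) < 4"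
    and "\<And>a b. {a,b} \<in> E \<Longrightarrow> fst (f a) \<noteq> fst (f b) \<and> ({a,b} \<in> Sig \<longleftrightarrow> tneg (f a) (f b))"
  shows "goodf V E Sig f"
  using assms unfolding goodf_def by blast

lemma goodfD1: "goodf V E Sig f \<Longrightarrow> v \<in> V \<Longrightarrow> fst (f v) < 4"
  unfolding goodf_def by blast

lemma goodfD2: "goodf V E Sig f \<Longrightarrow> {a,b} \<in> E \<Longrightarrow> fst (f a) \<noteq> fst (f b) \<and> ({a,b} \<in> Sig \<longleftrightarrow> tneg (f a) (f b))"
  unfolding goodf_def by blast

lemma edge_not_loop:
  assumes h: "\<forall>e\<in>E. e \<subseteq> V \<and> card e = 2" "{a,b} \<in> E"
  shows "a \<noteq> b"
proof
  assume "a = b"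
  then have "card {a,b} = 1" by simp
  moreover have "card {a,b} = 2" using h by blast
  ultimately show False by simp
qed

lemma edge_in: "\<forall>e\<in>E. e \<subseteq> V \<and> card e = 2 \<Longrightarrow> {a,b} \<in> E \<Longrightarrow> a \<in> V \<and> b \<in> V"
  by blast

lemma ext0:
  assumes E: "\<forall>e\<in>E. e \<subseteq> V \<and> card e = 2"
    and g: "goodf (V - {x}) {e\<in>E. e \<subseteq> V - {x}} Sig f"
    and nb: "\<forall>t. {x,t} \<notin> E"
  shows "goodf V E Sig (f(x := (0,False)))"
proof (rule goodfI)
  fix v assume "v \<in> V" then show "fst ((f(x := (0, False))) v) < 4"
    using goodfD1[OF g, of v] by (cases "v = x") auto
next
  fix a b assume ab: "{a,b} \<in> E"
  have "a \<noteq> x" using nb ab by auto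
  moreover have "b \<noteq> x" using nb[rule_format, of a] ab insert_commute[of a b] by auto
  ultimately have "{a,b} \<in> {e\<in>E. e \<subseteq> V - {x}}" using ab E by auto
  then show "fst ((f(x := (0, False))) a) \<noteq> fst ((f(x := (0, False))) b) \<and>
       ({a, b} \<in> Sig \<longleftrightarrow> tneg ((f(x := (0, False))) a) ((f(x := (0, False))) b))"
    using goodfD2[OF g] \<open>a \<noteq> x\<close> \<open>b \<noteq> x\<close> by simp
qed

lemma ext1:
  assumes E: "\<forall>e\<in>E. e \<subseteq> V \<and> card e = 2"
    and g: "goodf (V - {x}) {e\<in>E. e \<subseteq> V - {x}} Sig f"
    and u: "u \<in> V" "u \<noteq> x"
    and nb: "\<forall>t. {x,t} \<in> E \<longrightarrow> t = u"
  shows "\<exists>f. goodf V E Sig f"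
proof -
  have "fst (f u) < 4" using goodfD1[OF g, of u] u by simp
  then obtain q where q: "fst q < 4" "fst q \<noteq> fst (f u)" "tneg (f u) q = ({u,x} \<in> Sig)"
    using P1[rule_format, OF \<open>fst (f u) < 4\<close>, of "{u,x} \<in> Sig"] by blast
  have "goodf V E Sig (f(x := q))"
  proof (rule goodfI)
    fix v assume "v \<in> V" then show "fst ((f(x := q)) v) < 4"
      using goodfD1[OF g, of v] q by (cases "v = x") auto
  next
    fix a b assume ab: "{a,b} \<in> E"
    have ne: "a \<noteq> b" using edge_not_loop[OF E ab] .
    show "fst ((f(x := q)) a) \<noteq> fst ((f(x := q)) b) \<and>
       ({a, b} \<in> Sig \<longleftrightarrow> tneg ((f(x := q)) a) ((f(x := q)) b))"
    proof (cases "a = x")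
      case True
      then have "b = u" using nb ab by auto
      then show ?thesis using True q u tneg_sym[of q "f u"] insert_commute[of x u] by auto
    next
      case False
      show ?thesis
      proof (cases "b = x")
        case True
        then have "a = u" using nb[rule_format, of a] ab insert_commute[of a b] by auto
        then show ?thesis using True q u by auto
      next
        case False
        then have "{a,b} \<in> {e\<in>E. e \<subseteq> V - {x}}" using ab E \<open>a \<noteq> x\<close> by auto
        then show ?thesis using goodfD2[OF g] \<open>a \<noteq> x\<close> False by simp
      qed
    qed
  qed
  then show ?thesis by blast
qed

lemma ext2:
  assumes E: "\<forall>e\<in>E. e \<subseteq> V \<and> card e = 2"
    and g: "goodf (V - {x,y}) {e\<in>E. e \<subseteq> V - {x,y}} Sig f"
    and xy: "{x,y} \<in> E" and u: "u \<in> V" "u \<noteq> x" "u \<noteq> y"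
    and nbx: "\<forall>t. {x,t} \<in> E \<longrightarrow> t = y \<or> t = u"
    and nby: "\<forall>t t'. {y,t} \<in> E \<longrightarrow> {y,t'} \<in> E \<longrightarrow> t \<noteq> x \<longrightarrow> t' \<noteq> x \<longrightarrow> t = t'"
  shows "\<exists>f. goodf V E Sig f"
proof -
  have "x \<noteq> y" using edge_not_loop[OF E xy] .
  define w where "w = (if \<exists>t. {y,t} \<in> E \<and> t \<noteq> x then (SOME t. {y,t} \<in> E \<and> t \<noteq> x) else u)"
  have w0: "w \<in> V \<and> w \<noteq> x \<and> w \<noteq> y \<and> (\<forall>t. {y,t} \<in> E \<longrightarrow> t \<noteq> x \<longrightarrow> t = w)"
    proof (cases "\<exists>t. {y,t} \<in> E \<and> t \<noteq> x")
      case True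
      have "{y,SOME t. {y,t} \<in> E \<and> t \<noteq> x} \<in> E \<and> (SOME t. {y,t} \<in> E \<and> t \<noteq> x) \<noteq> x"
        using True by (rule someI_ex[where P="\<lambda>t. {y,t} \<in> E \<and> t \<noteq> x"])
      then have w1: "{y,w} \<in> E \<and> w \<noteq> x" using True unfolding w_def by simp
      have "w \<in> V" using edge_in[OF E, of y w] w1 by blast
      moreover have "w \<noteq> y" using edge_not_loop[OF E, of y w] w1 by blast
      moreover have "\<forall>t. {y,t} \<in> E \<longrightarrow> t \<noteq> x \<longrightarrow> t = w"
      proof (intro allI impI)
        fix t assume "{y,t} \<in> E" "t \<noteq> x"
        then show "t = w" using nby w1 by blast
      qed
      ultimately show ?thesis using w1 by blast
    next
      case False
      then show ?thesis using u unfolding w_def by auto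
    qed
  have w: "w \<in> V" "w \<noteq> x" "w \<noteq> y" "\<forall>t. {y,t} \<in> E \<longrightarrow> t \<noteq> x \<longrightarrow> t = w"
    using w0 by auto
  have fu: "fst (f u) < 4" using goodfD1[OF g, of u] u by simp
  have fw: "fst (f w) < 4" using goodfD1[OF g, of w] w by simp
  obtain X Y where XY: "fst X < 4" "fst Y < 4" "fst X \<noteq> fst (f u)" "fst Y \<noteq> fst X" "fst (f w) \<noteq> fst Y"
    "tneg (f u) X = ({u,x} \<in> Sig)" "tneg X Y = ({x,y} \<in> Sig)" "tneg Y (f w) = ({y,w} \<in> Sig)"
    using P3[rule_format, OF fu fw, of "{u,x} \<in> Sig" "{x,y} \<in> Sig" "{y,w} \<in> Sig"] by blast
  let ?f = "f(x := X, y := Y)"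
  have fx: "?f x = X" using \<open>x \<noteq> y\<close> by simp
  have fy: "?f y = Y" by simp
  have fu': "?f u = f u" using u by simp
  have fw': "?f w = f w" using w by simp
  have "goodf V E Sig ?f"
  proof (rule goodfI)
    fix v assume "v \<in> V" then show "fst (?f v) < 4"
      using goodfD1[OF g, of v] XY by (cases "v = x \<or> v = y") auto
  next
    fix a b assume ab: "{a,b} \<in> E"
    have ne: "a \<noteq> b" using edge_not_loop[OF E ab] .
    have ab': "{b,a} \<in> E" using ab insert_commute[of a b] by simp
    show "fst (?f a) \<noteq> fst (?f b) \<and> ({a, b} \<in> Sig \<longleftrightarrow> tneg (?f a) (?f b))"
    proof (cases "a = x \<or> a = y \<or> b = x \<or> b = y")
      case False
      then have "{a,b} \<in> {e\<in>E. e \<subseteq> V - {x,y}}" using ab E by auto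
      then show ?thesis using goodfD2[OF g] False by simp
    next
      case True
      have c: "(a = x \<and> (b = y \<or> b = u)) \<or> (a = y \<and> (b = x \<or> b = w)) \<or>
        (b = x \<and> (a = y \<or> a = u)) \<or> (b = y \<and> (a = x \<or> a = w))"
        using True
      proof (elim disjE)
        assume "a = x" then show ?thesis using nbx ab by simp
      next
        assume "a = y" then show ?thesis using w(4) ab by auto
      next
        assume "b = x" then show ?thesis using nbx ab' by simp
      next
        assume "b = y" then show ?thesis using w(4) ab' by auto
      qed
      then consider "a = x" "b = y" | "a = x" "b = u" | "a = y" "b = x" | "a = y" "b = w"
        | "b = x" "a = u" | "b = y" "a = w"
        by blast
      then show ?thesis
      proof cases
        case 1 then show ?thesis using fx fy XY by simp
      next
        case 2 then show ?thesis using fx fu' XY tneg_sym[of X "f u"] insert_commute[of x u] by auto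
      next
        case 3 then show ?thesis using fx fy XY tneg_sym[of Y X] insert_commute[of y x] by auto
      next
        case 4 then show ?thesis using fy fw' XY by auto
      next
        case 5 then show ?thesis using fx fu' XY by auto
      next
        case 6 then show ?thesis using fy fw' XY tneg_sym[of "f w" Y] insert_commute[of w y] by auto
      qed
    qed
  qed
  then show ?thesis by blast
qed



definition hyps :: "'a set \<Rightarrow> 'a set set \<Rightarrow> ('a \<Rightarrow> nat) \<Rightarrow> bool" where
  "hyps V E pos \<longleftrightarrow> finite V \<and> (\<forall>e\<in>E. e \<subseteq> V \<and> card e = 2) \<and> inj_on pos V \<and>
    (\<forall>a b c d. {a,b} \<in> E \<longrightarrow> {c,d} \<in> E \<longrightarrow> \<not> (pos a < pos c \<and> pos c < pos b \<and> pos b < pos d)) \<and>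
    (\<forall>a b c. {a,b} \<in> E \<longrightarrow> {b,c} \<in> E \<longrightarrow> {a,c} \<in> E \<longrightarrow> False)"

lemma hyps_sub:
  assumes "hyps V E pos" "V' \<subseteq> V"
  shows "hyps V' {e\<in>E. e \<subseteq> V'} pos"
proof -
  have "finite V'" using assms finite_subset unfolding hyps_def by blast
  moreover have "inj_on pos V'" using assms inj_on_subset unfolding hyps_def by blast
  moreover have "\<forall>e\<in>{e\<in>E. e \<subseteq> V'}. e \<subseteq> V' \<and> card e = 2" using assms unfolding hyps_def by blast
  moreover have "\<forall>a b c d. {a,b} \<in> {e\<in>E. e \<subseteq> V'} \<longrightarrow> {c,d} \<in> {e\<in>E. e \<subseteq> V'} \<longrightarrow> \<not> (pos a < pos c \<and> pos c < pos b \<and> pos b < pos d)"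
    using assms unfolding hyps_def by blast
  moreover have "\<forall>a b c. {a,b} \<in> {e\<in>E. e \<subseteq> V'} \<longrightarrow> {b,c} \<in> {e\<in>E. e \<subseteq> V'} \<longrightarrow> {a,c} \<in> {e\<in>E. e \<subseteq> V'} \<longrightarrow> False"
    using assms unfolding hyps_def by blast
  ultimately show ?thesis unfolding hyps_def by blast
qed

lemma main:
  assumes "hyps V E pos"
  shows "\<exists>f. goodf V E Sig f"
  using assms
proof (induction "card V" arbitrary: V E rule: less_induct)
  case less
  note H = less.prems
  have fin: "finite V" using H unfolding hyps_def by blast
  have E: "\<forall>e\<in>E. e \<subseteq> V \<and> card e = 2" using H unfolding hyps_def by blast
  have inj: "inj_on pos V" using H unfolding hyps_def by blast
  have nc: "\<And>a b c d. {a,b} \<in> E \<Longrightarrow> {c,d} \<in> E \<Longrightarrow> pos a < pos c \<Longrightarrow> pos c < pos b \<Longrightarrow> pos b < pos d \<Longrightarrow> False"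
    using H unfolding hyps_def by blast
  have tri: "\<And>a b c. {a,b} \<in> E \<Longrightarrow> {b,c} \<in> E \<Longrightarrow> {a,c} \<in> E \<Longrightarrow> False"
    using H unfolding hyps_def by blast
  have injD: "\<And>s t. s \<in> V \<Longrightarrow> t \<in> V \<Longrightarrow> pos s = pos t \<Longrightarrow> s = t"
    using inj unfolding inj_on_def by blast
  have IH: "\<exists>f. goodf (V - X) {e\<in>E. e \<subseteq> V - X} Sig f" if X: "X \<subseteq> V" "X \<noteq> {}" for X
  proof -
    have "V - X \<subset> V" using X by blast
    then have "card (V - X) < card V" by (rule psubset_card_mono[OF fin])
    moreover have "hyps (V - X) {e\<in>E. e \<subseteq> V - X} pos" by (rule hyps_sub[OF H]) blast
    ultimately show ?thesis using less.hyps by blast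
  qed
  show ?case
  proof (cases "V = {}")
    case True
    have "goodf V E Sig (\<lambda>_. (0, False))"
    proof (rule goodfI)
      fix v assume "v \<in> V" then show "fst ((\<lambda>_. (0::nat, False)) v) < 4" using True by simp
    next
      fix a b assume "{a,b} \<in> E"
      then have "a \<in> V" using edge_in[OF E] by blast
      then show "fst ((\<lambda>_. (0::nat, False)) a) \<noteq> fst ((\<lambda>_. (0::nat, False)) b) \<and>
        ({a, b} \<in> Sig \<longleftrightarrow> tneg ((\<lambda>_. (0::nat, False)) a) ((\<lambda>_. (0::nat, False)) b))" using True by simp
    qed
    then show ?thesis by blast
  next
    case Vne: False
    show ?thesis
    proof (cases "\<exists>x\<in>V. \<forall>t t'. {x,t} \<in> E \<longrightarrow> {x,t'} \<in> E \<longrightarrow> t = t'")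
      case True
      then obtain x where x: "x \<in> V" "\<forall>t t'. {x,t} \<in> E \<longrightarrow> {x,t'} \<in> E \<longrightarrow> t = t'" by blast
      obtain f where g: "goodf (V - {x}) {e\<in>E. e \<subseteq> V - {x}} Sig f" using IH[of "{x}"] x by auto
      show ?thesis
      proof (cases "\<exists>u. {x,u} \<in> E")
        case True
        then obtain u where xu: "{x,u} \<in> E" by blast
        have "u \<in> V" using edge_in[OF E xu] by blast
        moreover have "u \<noteq> x" using edge_not_loop[OF E xu] by simp
        moreover have "\<forall>t. {x,t} \<in> E \<longrightarrow> t = u" using x(2) xu by blast
        ultimately show ?thesis using ext1[OF E g] by blast
      next
        case False
        then show ?thesis using ext0[OF E g] by blast
      qed
    next
      case False
      then have two: "\<And>x. x \<in> V \<Longrightarrow> \<exists>t t'. {x,t} \<in> E \<and> {x,t'} \<in> E \<and> t \<noteq> t'" by blast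
      have "Min (pos ` V) \<in> pos ` V" using fin Vne by simp
      then obtain v0 where v0: "v0 \<in> V" "pos v0 = Min (pos ` V)" by auto
      have v0min: "\<And>v. v \<in> V \<Longrightarrow> pos v0 \<le> pos v" using v0 fin by simp
      obtain t t' where tt: "{v0,t} \<in> E" "{v0,t'} \<in> E" "t \<noteq> t'" using two[OF v0(1)] by blast
      have tV: "t \<in> V" "t' \<in> V" using edge_in[OF E tt(1)] edge_in[OF E tt(2)] by auto
      have "pos t \<noteq> pos t'" using injD tV tt(3) by blast
      then obtain lo hi where lohi: "{v0,lo} \<in> E" "{v0,hi} \<in> E" "pos lo < pos hi" "lo \<in> V" "hi \<in> V"
        using tt tV by (metis linorder_neq_iff)
      have "lo \<noteq> v0" using edge_not_loop[OF E lohi(1)] by simp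
      then have "pos v0 < pos lo" using v0min[OF lohi(4)] injD[OF v0(1) lohi(4)] by fastforce
      define C where "C = {(a,b). {a,b} \<in> E \<and> pos a < pos b \<and> (\<exists>s\<in>V. pos a < pos s \<and> pos s < pos b)}"
      have "(v0,hi) \<in> C" unfolding C_def using lohi \<open>pos v0 < pos lo\<close> by auto
      then obtain ab where abC: "ab \<in> C" and minC: "\<forall>cd. cd \<in> C \<longrightarrow> pos (snd ab) - pos (fst ab) \<le> pos (snd cd) - pos (fst cd)"
        using ex_has_least_nat[of "\<lambda>p. p \<in> C" "(v0,hi)" "\<lambda>p. pos (snd p) - pos (fst p)"] by blast
      obtain a b where ab: "ab = (a,b)" by (cases ab)
      have abE: "{a,b} \<in> E" and pab: "pos a < pos b" and Sne: "\<exists>s\<in>V. pos a < pos s \<and> pos s < pos b"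
        using abC unfolding ab C_def by auto
      have aV: "a \<in> V" and bV: "b \<in> V" using edge_in[OF E abE] by auto
      have noin: False if "{c,d} \<in> E" "pos c < pos d" "pos d - pos c < pos b - pos a" "v \<in> V"
        "pos c < pos v" "pos v < pos d" for c d v
      proof -
        have "(c,d) \<in> C" unfolding C_def using that by auto
        then have "pos b - pos a \<le> pos d - pos c" using minC unfolding ab by auto
        then show False using that(3) by simp
      qed
      have range: "pos a \<le> pos t \<and> pos t \<le> pos b" if "s \<in> V" "pos a < pos s" "pos s < pos b" "{s,t} \<in> E" for s t
      proof (rule ccontr)
        assume "\<not> (pos a \<le> pos t \<and> pos t \<le> pos b)"
        then consider "pos t < pos a" | "pos b < pos t" by linarith
        then show False
        proof cases
          case 1
          have "{t,s} \<in> E" using that(4) by (simp add: insert_commute)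
          then show False using nc[OF _ abE, of t s] 1 that by blast
        next
          case 2
          then show False using nc[OF abE that(4)] that by blast
        qed
      qed
      define S where "S = {s\<in>V. pos a < pos s \<and> pos s < pos b}"
      have finS: "finite S" unfolding S_def using fin by simp
      have Sne': "S \<noteq> {}" unfolding S_def using Sne by blast
      have "Min (pos ` S) \<in> pos ` S" using finS Sne' by simp
      then obtain x where xS: "x \<in> S" "pos x = Min (pos ` S)" by auto
      have xmin: "\<And>s. s \<in> S \<Longrightarrow> pos x \<le> pos s" using xS finS by simp
      have xV: "x \<in> V" and px: "pos a < pos x" "pos x < pos b" using xS(1) unfolding S_def by auto
      define imm where "imm p q \<longleftrightarrow> pos p < pos q \<and> q \<in> V \<and> \<not> (\<exists>v\<in>V. pos p < pos v \<and> pos v < pos q)" for p q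
      have imm_unique: "q = q'" if "imm p q" "imm p q'" for p q q'
      proof -
        have "\<not> pos q < pos q'" using that unfolding imm_def by blast
        moreover have "\<not> pos q' < pos q" using that unfolding imm_def by blast
        ultimately have "pos q = pos q'" by simp
        then show ?thesis using injD that unfolding imm_def by blast
      qed
      have nbx_cases: "t = a \<or> imm x t" if xt: "{x,t} \<in> E" for t
      proof -
        have tV: "t \<in> V" using edge_in[OF E xt] by blast
        have "t \<noteq> x" using edge_not_loop[OF E xt] by simp
        then have ne: "pos t \<noteq> pos x" using injD tV xV by blast
        have rg: "pos a \<le> pos t" "pos t \<le> pos b" using range[OF xV px xt] by auto
        show ?thesis
        proof (cases "pos t < pos x")
          case True
          have "\<not> pos a < pos t"
          proof
            assume "pos a < pos t"
            then have "t \<in> S" unfolding S_def using tV True px by auto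
            then show False using xmin True by fastforce
          qed
          then have "pos t = pos a" using rg by simp
          then show ?thesis using injD tV aV by blast
        next
          case False
          then have lt: "pos x < pos t" using ne by simp
          have "\<not> (\<exists>v\<in>V. pos x < pos v \<and> pos v < pos t)"
          proof
            assume "\<exists>v\<in>V. pos x < pos v \<and> pos v < pos t"
            then obtain v where "v \<in> V" "pos x < pos v" "pos v < pos t" by blast
            moreover have "pos t - pos x < pos b - pos a" using rg px lt by simp
            ultimately show False using noin[OF xt lt] by blast
          qed
          then show ?thesis unfolding imm_def using lt tV by blast
        qed
      qed
      obtain t1 t2 where t12: "{x,t1} \<in> E" "{x,t2} \<in> E" "t1 \<noteq> t2" using two[OF xV] by blast
      obtain y where xa: "{x,a} \<in> E" and xy: "{x,y} \<in> E" and ixy: "imm x y"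
      proof (cases "t1 = a")
        case True
        then have "imm x t2" using nbx_cases[OF t12(2)] t12(3) by blast
        then show ?thesis using that t12 True by blast
      next
        case False
        then have i1: "imm x t1" using nbx_cases[OF t12(1)] by blast
        show ?thesis
        proof (cases "t2 = a")
          case True
          then show ?thesis using that t12 i1 by blast
        next
          case False
          then have "imm x t2" using nbx_cases[OF t12(2)] by blast
          then show ?thesis using imm_unique i1 t12(3) by blast
        qed
      qed
      have nbx: "\<forall>t. {x,t} \<in> E \<longrightarrow> t = y \<or> t = a"
        using nbx_cases imm_unique ixy by blast
      have yV: "y \<in> V" and pxy: "pos x < pos y" using ixy unfolding imm_def by auto
      have "y \<noteq> b"
      proof
        assume "y = b"
        have "{a,x} \<in> E" using xa by (simp add: insert_commute)
        then show False using tri[OF _ _ abE, of x] xy \<open>y = b\<close> by blast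
      qed
      have "pos y \<le> pos b" using range[OF xV px xy] by simp
      moreover have "pos y \<noteq> pos b" using injD yV bV \<open>y \<noteq> b\<close> by blast
      ultimately have pyb: "pos y < pos b" by simp
      have pay: "pos a < pos y" using px pxy by simp
      have nby_cases: "imm y t" if yt: "{y,t} \<in> E" "t \<noteq> x" for t
      proof -
        have tV: "t \<in> V" using edge_in[OF E yt(1)] by blast
        have "t \<noteq> y" using edge_not_loop[OF E yt(1)] by simp
        then have ne: "pos t \<noteq> pos y" using injD tV yV by blast
        have rg: "pos a \<le> pos t" "pos t \<le> pos b" using range[OF yV pay pyb yt(1)] by auto
        show ?thesis
        proof (cases "pos t < pos y")
          case True
          show ?thesis
          proof (cases "t = a")
            case True
            have "{a,y} \<in> E" using yt(1) True by (simp add: insert_commute)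
            moreover have "pos y - pos a < pos b - pos a" using pyb pay by simp
            ultimately show ?thesis using noin[of a y x] pay xV px pxy by blast
          next
            case False
            then have "pos t \<noteq> pos a" using injD tV aV by blast
            then have "t \<in> S" unfolding S_def using tV rg True pyb by auto
            then have "pos x \<le> pos t" using xmin by blast
            moreover have "pos t \<noteq> pos x" using injD tV xV yt(2) by blast
            ultimately show ?thesis using ixy True tV unfolding imm_def by force
          qed
        next
          case False
          then have lt: "pos y < pos t" using ne by simp
          have "\<not> (\<exists>v\<in>V. pos y < pos v \<and> pos v < pos t)"
          proof
            assume "\<exists>v\<in>V. pos y < pos v \<and> pos v < pos t"
            then obtain v where "v \<in> V" "pos y < pos v" "pos v < pos t" by blast
            moreover have "pos t - pos y < pos b - pos a" using rg pay lt by simp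
            ultimately show False using noin[OF yt(1) lt] by blast
          qed
          then show ?thesis unfolding imm_def using lt tV by blast
        qed
      qed
      have nby: "\<forall>t t'. {y,t} \<in> E \<longrightarrow> {y,t'} \<in> E \<longrightarrow> t \<noteq> x \<longrightarrow> t' \<noteq> x \<longrightarrow> t = t'"
        using nby_cases imm_unique by blast
      have "a \<noteq> x" "a \<noteq> y" using px pay by auto
      obtain f where g: "goodf (V - {x,y}) {e\<in>E. e \<subseteq> V - {x,y}} Sig f"
        using IH[of "{x,y}"] xV yV by auto
      show ?thesis using ext2[OF E g xy aV \<open>a \<noteq> x\<close> \<open>a \<noteq> y\<close> nbx nby] by blast
    qed
  qed
qed



lemma lt4: "(n::nat) < 4 \<Longrightarrow> n \<in> {0,1,2,3}"
  by (auto simp: less_Suc_eq numeral_eq_Suc)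

lemma at_edge:
  assumes "fst p \<noteq> fst q" "fst p < 4" "fst q < 4"
  shows "{fst p, fst q} \<in> K4_edges"
  unfolding K4_edges_def K4_vertices_def using assms lt4 by blast

lemma at_edges:
  assumes "fst p \<noteq> fst q" "fst p < 4" "fst q < 4"
  shows "{p,q} \<in> AT_edges K4_edges"
proof -
  have "{p,q} = {(fst p, snd p), (fst q, snd q)}" by simp
  then show ?thesis unfolding AT_edges_def using at_edge[OF assms] by blast
qed

lemma at_neg:
  assumes "fst p \<noteq> fst q" "fst p < 4" "fst q < 4"
  shows "{p,q} \<in> AT_neg K4_edges K4_neg \<longleftrightarrow> tneg p q"
proof
  assume "{p,q} \<in> AT_neg K4_edges K4_neg"
  then obtain u v i j where h: "{p,q} = {(u,i),(v,j)}" "({u,v} \<in> K4_neg) \<noteq> (i \<noteq> j)"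
    unfolding AT_neg_def by blast
  from h(1) have "(p = (u,i) \<and> q = (v,j)) \<or> (p = (v,j) \<and> q = (u,i))" by (simp add: doubleton_eq_iff)
  then show "tneg p q"
  proof
    assume "p = (u,i) \<and> q = (v,j)" then show ?thesis using h(2) unfolding tneg_def K4_neg_def by simp
  next
    assume "p = (v,j) \<and> q = (u,i)" then have "tneg q p" using h(2) unfolding tneg_def K4_neg_def by simp
    then show ?thesis using tneg_sym[of p q] by simp
  qed
next
  assume t: "tneg p q"
  have pq: "{p,q} = {(fst p, snd p), (fst q, snd q)}" by simp
  have "({fst p, fst q} \<in> K4_neg) \<noteq> (snd p \<noteq> snd q)" using t unfolding tneg_def K4_neg_def by simp
  then show "{p,q} \<in> AT_neg K4_edges K4_neg"
    unfolding AT_neg_def using pq at_edge[OF assms] by blast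
qed

lemma good_hom:
  assumes E: "\<forall>e\<in>E. e \<subseteq> V \<and> card e = 2" and g: "goodf V E Sig f"
  shows "signified_hom V E Sig (AT_vertices K4_vertices) (AT_edges K4_edges) (AT_neg K4_edges K4_neg) f"
  unfolding signified_hom_def
proof (intro conjI ballI)
  fix v assume "v \<in> V"
  then have "fst (f v) < 4" using goodfD1[OF g] by blast
  then have "fst (f v) \<in> K4_vertices" unfolding K4_vertices_def using lt4 by blast
  then show "f v \<in> AT_vertices K4_vertices" unfolding AT_vertices_def by (cases "f v") auto
next
  fix e assume eE: "e \<in> E"
  then have "card e = 2" using E by blast
  then obtain a b where e: "e = {a,b}" "a \<noteq> b" by (auto simp: card_2_iff)
  have abE: "{a,b} \<in> E" using eE e by simp
  have ab: "a \<in> V" "b \<in> V" using edge_in[OF E abE] by auto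
  have fa: "fst (f a) < 4" "fst (f b) < 4" using goodfD1[OF g] ab by auto
  have gg: "fst (f a) \<noteq> fst (f b)" "{a,b} \<in> Sig \<longleftrightarrow> tneg (f a) (f b)" using goodfD2[OF g abE] by auto
  have img: "f ` e = {f a, f b}" using e by simp
  show "f ` e \<in> AT_edges K4_edges" unfolding img using at_edges[OF gg(1) fa] .
  show "e \<in> Sig \<longleftrightarrow> f ` e \<in> AT_neg K4_edges K4_neg"
    unfolding img using at_neg[OF gg(1) fa] gg(2) e(1) by simp
qed


theorem mainTheorem11:
  fixes V :: "'a set" and E Sig :: "'a set set"
  assumes "signified_graph V E Sig"
    and "outerplanar V E"
    and "girth_at_least V E 4"
  shows "\<exists>f. signified_hom V E Sig
                (AT_vertices K4_vertices) (AT_edges K4_edges) (AT_neg K4_edges K4_neg) f"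
proof -
  have fin: "finite V" and E: "\<forall>e\<in>E. e \<subseteq> V \<and> card e = 2"
    using assms(1) unfolding signified_graph_def simple_graph_def by auto
  obtain pos :: "'a \<Rightarrow> nat" where inj: "inj_on pos V" and
    nc: "\<forall>a b c d. {a, b} \<in> E \<longrightarrow> {c, d} \<in> E \<longrightarrow> \<not> (pos a < pos c \<and> pos c < pos b \<and> pos b < pos d)"
    using assms(2) unfolding outerplanar_def by blast
  have tri: "\<forall>a b c. {a,b} \<in> E \<longrightarrow> {b,c} \<in> E \<longrightarrow> {a,c} \<in> E \<longrightarrow> False"
  proof (intro allI impI)
    fix a b c assume ab: "{a,b} \<in> E" and bc: "{b,c} \<in> E" and ac: "{a,c} \<in> E"
    have ne: "a \<noteq> b" "b \<noteq> c" "a \<noteq> c" using edge_not_loop[OF E] ab bc ac by auto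
    have V3: "a \<in> V" "b \<in> V" "c \<in> V" using edge_in[OF E] ab bc by auto
    have ca: "{c,a} \<in> E" using ac insert_commute[of a c "{}"] by simp
    have "is_cycle V E [a,b,c]"
      unfolding is_cycle_def
    proof (intro conjI allI impI)
      show "3 \<le> length [a,b,c]" by simp
      show "distinct [a,b,c]" using ne by simp
      show "set [a,b,c] \<subseteq> V" using V3 by simp
      fix i assume "i < length [a,b,c]"
      then have "i = 0 \<or> i = 1 \<or> i = 2" by auto
      then show "{[a,b,c] ! i, [a,b,c] ! ((i + 1) mod length [a,b,c])} \<in> E"
        using ab bc ca by auto
    qed
    then have "4 \<le> length [a,b,c]" using assms(3) unfolding girth_at_least_def by blast
    then show False by simp
  qed
  have "hyps V E pos" unfolding hyps_def using fin E inj nc tri by blast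
  then obtain f where "goodf V E Sig f" using main by blast
  then show ?thesis using good_hom[OF E] by blast
qed

end
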